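(* Let $\alpha:F_N\to\pi_1(\Gamma)$ be a marking, $X=\widetilde\Gamma$, let $K$ be a finite non-degenerate subtree of $X$ with terminal edges $e_1,\dots,e_n$, and let $\mu\in\mathcal S\mathrm{Curr}(F_N)$. Then for every $i=1,\dots,n$, $(K;\mu)_\alpha=\sum_{U\in P_+(q(e_i))}(K\cup U;\mu)_\alpha.$
   Context: $\mathfrak C_N$ is the set of closed subsets of $\partial F_N$ with at least two points (Vietoris topology); $\mathcal S\mathrm{Curr}(F_N)$ is the set of positive $F_N$-invariant Borel measures on $\mathfrak C_N$ finite on compact sets. A marking is an isomorphism $\alpha:F_N\to\pi_1(\Gamma)$ with $\Gamma$ finite connected without degree-one vertices; $X=\widetilde\Gamma$ with $F_N$ acting via $\alpha$, $\partial X=\partial F_N$. A finite non-degenerate subtree $K$ has at least two degree-one vertices; its terminal edges are the oriented edges whose terminal vertices have degree one in $K$. For terminal edges $e_j$, $Cyl_X(e_j)$ is the set of ends of geodesic rays starting with $e_j$, $\mathcal SCyl_\alpha(K)=\{S\in\mathfrak C_N:S\subseteq\bigcup_j Cyl_X(e_j),\ S\cap Cyl_X(e_j)\ne\emptyset\ \forall j\}$, and $(K;\mu)_\alpha=\mu(\mathcal SCyl_\alpha(K))$. For an oriented edge $e$ of $X$, $q(e)$ is the set of oriented edges $e'$ such that $e,e'$ is a reduced edge-path (i.e. $o(e')=t(e)$, $e'\ne e^{-1}$); $P_+(B)$ is the set of nonempty subsets of $B$; $K\cup U$ is the subtree obtained by adding the edges in $U$ to $K$. *)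

theory Defs
  imports "HOL-Analysis.Analysis"
begin

definition fin_graph :: "'v set \<Rightarrow> 'e set \<Rightarrow> ('e \<Rightarrow> 'v) \<Rightarrow> ('e \<Rightarrow> 'v) \<Rightarrow> ('e \<Rightarrow> 'e) \<Rightarrow> bool" where
  "fin_graph V E org trm ebar \<longleftrightarrow> finite V \<and> finite E \<and> V \<noteq> {} \<and>
     (\<forall>e\<in>E. org e \<in> V \<and> trm e \<in> V \<and> ebar e \<in> E \<and> ebar (ebar e) = e \<and> ebar e \<noteq> e \<and> org (ebar e) = trm e)"

definition graph_connected :: "'v set \<Rightarrow> 'e set \<Rightarrow> ('e \<Rightarrow> 'v) \<Rightarrow> ('e \<Rightarrow> 'v) \<Rightarrow> bool" where
  "graph_connected V E org trm \<longleftrightarrow> (\<forall>u\<in>V. \<forall>v\<in>V. (u, v) \<in> {(org e, trm e) | e. e \<in> E}\<^sup>*)"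

definition no_degree_one :: "'v set \<Rightarrow> 'e set \<Rightarrow> ('e \<Rightarrow> 'v) \<Rightarrow> bool" where
  "no_degree_one V E org \<longleftrightarrow> (\<forall>v\<in>V. card {e \<in> E. org e = v} \<noteq> 1)"

definition red_path :: "'e set \<Rightarrow> ('e \<Rightarrow> 'v) \<Rightarrow> ('e \<Rightarrow> 'v) \<Rightarrow> ('e \<Rightarrow> 'e) \<Rightarrow> 'v \<Rightarrow> 'e list \<Rightarrow> bool" where
  "red_path E org trm ebar v0 p \<longleftrightarrow> set p \<subseteq> E \<and> (p \<noteq> [] \<longrightarrow> org (hd p) = v0) \<and>
     (\<forall>i. Suc i < length p \<longrightarrow> trm (p ! i) = org (p ! Suc i) \<and> p ! Suc i \<noteq> ebar (p ! i))"

definition path_end :: "('e \<Rightarrow> 'v) \<Rightarrow> 'v \<Rightarrow> 'e list \<Rightarrow> 'v" where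
  "path_end trm v0 p = (if p = [] then v0 else trm (last p))"

definition pi1 :: "'e set \<Rightarrow> ('e \<Rightarrow> 'v) \<Rightarrow> ('e \<Rightarrow> 'v) \<Rightarrow> ('e \<Rightarrow> 'e) \<Rightarrow> 'v \<Rightarrow> 'e list set" where
  "pi1 E org trm ebar v0 = {g. red_path E org trm ebar v0 g \<and> path_end trm v0 g = v0}"

text \<open>Vertices of X are reduced edge paths from v0; an oriented edge of X is a pair (p, a)
  with p a vertex of X and a an edge of Gamma starting at the endpoint of p.\<close>

definition X_vert :: "'e set \<Rightarrow> ('e \<Rightarrow> 'v) \<Rightarrow> ('e \<Rightarrow> 'v) \<Rightarrow> ('e \<Rightarrow> 'e) \<Rightarrow> 'v \<Rightarrow> 'e list set" where
  "X_vert E org trm ebar v0 = {p. red_path E org trm ebar v0 p}"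

definition X_edge :: "'e set \<Rightarrow> ('e \<Rightarrow> 'v) \<Rightarrow> ('e \<Rightarrow> 'v) \<Rightarrow> ('e \<Rightarrow> 'e) \<Rightarrow> 'v \<Rightarrow> ('e list \<times> 'e) set" where
  "X_edge E org trm ebar v0 = {(p, a). red_path E org trm ebar v0 p \<and> a \<in> E \<and> org a = path_end trm v0 p}"

definition X_o :: "('e list \<times> 'e) \<Rightarrow> 'e list" where
  "X_o e = fst e"

definition X_t :: "('e \<Rightarrow> 'e) \<Rightarrow> ('e list \<times> 'e) \<Rightarrow> 'e list" where
  "X_t ebar e = (case e of (p, a) \<Rightarrow> if p \<noteq> [] \<and> a = ebar (last p) then butlast p else p @ [a])"

definition X_inv :: "('e \<Rightarrow> 'e) \<Rightarrow> ('e list \<times> 'e) \<Rightarrow> ('e list \<times> 'e)" where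
  "X_inv ebar e = (X_t ebar e, ebar (snd e))"

definition q_edges :: "'e set \<Rightarrow> ('e \<Rightarrow> 'v) \<Rightarrow> ('e \<Rightarrow> 'v) \<Rightarrow> ('e \<Rightarrow> 'e) \<Rightarrow> 'v \<Rightarrow> ('e list \<times> 'e) \<Rightarrow> ('e list \<times> 'e) set" where
  "q_edges E org trm ebar v0 e = {e' \<in> X_edge E org trm ebar v0. X_o e' = X_t ebar e \<and> e' \<noteq> X_inv ebar e}"

text \<open>Points of the boundary are represented by the (unique) geodesic rays from the base vertex
  (the empty path), i.e. infinite reduced edge paths in Gamma from v0.\<close>

definition rays :: "'e set \<Rightarrow> ('e \<Rightarrow> 'v) \<Rightarrow> ('e \<Rightarrow> 'v) \<Rightarrow> ('e \<Rightarrow> 'e) \<Rightarrow> 'v \<Rightarrow> (nat \<Rightarrow> 'e) set" where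
  "rays E org trm ebar v0 = {r. (\<forall>i. r i \<in> E) \<and> org (r 0) = v0 \<and>
      (\<forall>i. trm (r i) = org (r (Suc i)) \<and> r (Suc i) \<noteq> ebar (r i))}"

definition bdry_top :: "'e set \<Rightarrow> ('e \<Rightarrow> 'v) \<Rightarrow> ('e \<Rightarrow> 'v) \<Rightarrow> ('e \<Rightarrow> 'e) \<Rightarrow> 'v \<Rightarrow> (nat \<Rightarrow> 'e) topology" where
  "bdry_top E org trm ebar v0 = subtopology (product_topology (\<lambda>_. discrete_topology E) UNIV) (rays E org trm ebar v0)"

definition is_prefix :: "'e list \<Rightarrow> (nat \<Rightarrow> 'e) \<Rightarrow> bool" where
  "is_prefix p r \<longleftrightarrow> (\<forall>i < length p. r i = p ! i)"

text \<open>If e points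
  towards the root (a reverses the last edge of p), these are the ends whose root ray does not
  pass through p; otherwise they are the ends whose root ray passes through p and then a.\<close>

definition Cyl :: "('e \<Rightarrow> 'e) \<Rightarrow> (nat \<Rightarrow> 'e) set \<Rightarrow> ('e list \<times> 'e) \<Rightarrow> (nat \<Rightarrow> 'e) set" where
  "Cyl ebar R e = (case e of (p, a) \<Rightarrow>
     if p \<noteq> [] \<and> a = ebar (last p) then {r \<in> R. \<not> is_prefix p r}
     else {r \<in> R. is_prefix p r \<and> r (length p) = a})"

text \<open>Action of pi_1(Gamma, v0) on the boundary: concatenate and reduce.\<close>

definition cancel_len :: "('e \<Rightarrow> 'e) \<Rightarrow> 'e list \<Rightarrow> (nat \<Rightarrow> 'e) \<Rightarrow> nat" where
  "cancel_len ebar g r = (GREATEST k. k \<le> length g \<and> (\<forall>i<k. g ! (length g - 1 - i) = ebar (r i)))"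

definition bdry_act :: "('e \<Rightarrow> 'e) \<Rightarrow> 'e list \<Rightarrow> (nat \<Rightarrow> 'e) \<Rightarrow> (nat \<Rightarrow> 'e)" where
  "bdry_act ebar g r = (let k = cancel_len ebar g r; m = length g - k in
      (\<lambda>i. if i < m then g ! i else r (i - m + k)))"

definition CN :: "(nat \<Rightarrow> 'e) topology \<Rightarrow> (nat \<Rightarrow> 'e) set set" where
  "CN T = {S. closedin T S \<and> (\<exists>x y. x \<in> S \<and> y \<in> S \<and> x \<noteq> y)}"

definition vietoris :: "'a topology \<Rightarrow> 'a set set \<Rightarrow> 'a set topology" where
  "vietoris T C = topology_generated_by
     ({{S \<in> C. S \<subseteq> U} | U. openin T U} \<union> {{S \<in> C. S \<inter> U \<noteq> {}} | U. openin T U})"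

definition borel_of :: "'a topology \<Rightarrow> 'a measure" where
  "borel_of T = sigma (topspace T) {U. openin T U}"

text \<open>Subset currents (transported along the marking to pi_1(Gamma, v0)): positive Borel measures
  on C_N (Vietoris topology), invariant under the group action, finite on compact sets.\<close>

definition subset_current ::
  "'e set \<Rightarrow> ('e \<Rightarrow> 'v) \<Rightarrow> ('e \<Rightarrow> 'v) \<Rightarrow> ('e \<Rightarrow> 'e) \<Rightarrow> 'v \<Rightarrow> (nat \<Rightarrow> 'e) set measure \<Rightarrow> bool" where
  "subset_current E org trm ebar v0 M \<longleftrightarrow>
     (let T = bdry_top E org trm ebar v0; C = CN T; VT = vietoris T C in
       sets M = sets (borel_of VT) \<and> space M = topspace VT \<and>
       (\<forall>g \<in> pi1 E org trm ebar v0. \<forall>A \<in> sets M.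
           emeasure M ((\<lambda>S. bdry_act ebar g ` S) ` A) = emeasure M A) \<and>
       (\<forall>K. compactin VT K \<longrightarrow> emeasure M K < \<infinity>))"

text \<open>A finite subtree is given by its (finite, nonempty, inversion-closed, connected) set of
  oriented edges of X.\<close>

definition sub_verts :: "('e \<Rightarrow> 'e) \<Rightarrow> ('e list \<times> 'e) set \<Rightarrow> 'e list set" where
  "sub_verts ebar K = X_o ` K"

definition finite_subtree ::
  "'e set \<Rightarrow> ('e \<Rightarrow> 'v) \<Rightarrow> ('e \<Rightarrow> 'v) \<Rightarrow> ('e \<Rightarrow> 'e) \<Rightarrow> 'v \<Rightarrow> ('e list \<times> 'e) set \<Rightarrow> bool" where
  "finite_subtree E org trm ebar v0 K \<longleftrightarrow> finite K \<and> K \<noteq> {} \<and> K \<subseteq> X_edge E org trm ebar v0 \<and>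
     (\<forall>e\<in>K. X_inv ebar e \<in> K) \<and>
     (\<forall>u \<in> sub_verts ebar K. \<forall>v \<in> sub_verts ebar K. (u, v) \<in> {(X_o e, X_t ebar e) | e. e \<in> K}\<^sup>*)"

definition sub_deg :: "('e list \<times> 'e) set \<Rightarrow> 'e list \<Rightarrow> nat" where
  "sub_deg K v = card {e \<in> K. X_o e = v}"

definition non_degenerate :: "('e \<Rightarrow> 'e) \<Rightarrow> ('e list \<times> 'e) set \<Rightarrow> bool" where
  "non_degenerate ebar K \<longleftrightarrow> card {v \<in> sub_verts ebar K. sub_deg K v = 1} \<ge> 2"

definition terminal_edges :: "('e \<Rightarrow> 'e) \<Rightarrow> ('e list \<times> 'e) set \<Rightarrow> ('e list \<times> 'e) set" where
  "terminal_edges ebar K = {e \<in> K. sub_deg K (X_t ebar e) = 1}"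

text \<open>K \<union> U: the subtree obtained by adding the (geometric) edges of U.\<close>

definition add_edges :: "('e \<Rightarrow> 'e) \<Rightarrow> ('e list \<times> 'e) set \<Rightarrow> ('e list \<times> 'e) set \<Rightarrow> ('e list \<times> 'e) set" where
  "add_edges ebar K U = K \<union> U \<union> X_inv ebar ` U"

definition SCyl :: "'e set \<Rightarrow> ('e \<Rightarrow> 'v) \<Rightarrow> ('e \<Rightarrow> 'v) \<Rightarrow> ('e \<Rightarrow> 'e) \<Rightarrow> 'v \<Rightarrow> ('e list \<times> 'e) set \<Rightarrow> (nat \<Rightarrow> 'e) set set" where
  "SCyl E org trm ebar v0 K = {S \<in> CN (bdry_top E org trm ebar v0).
      S \<subseteq> (\<Union>e \<in> terminal_edges ebar K. Cyl ebar (rays E org trm ebar v0) e) \<and>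
      (\<forall>e \<in> terminal_edges ebar K. S \<inter> Cyl ebar (rays E org trm ebar v0) e \<noteq> {})}"

end

theory Submission imports Defs "HOL-Library.Sublist" begin

definition bwd :: "('e \<Rightarrow> 'e) \<Rightarrow> 'e list \<times> 'e \<Rightarrow> bool" where
  "bwd ebar e \<longleftrightarrow> fst e \<noteq> [] \<and> snd e = ebar (last (fst e))"
definition kw :: "('e \<Rightarrow> 'e) \<Rightarrow> 'e list \<times> 'e \<Rightarrow> 'e list" where
  "kw ebar e = (if bwd ebar e then fst e else fst e @ [snd e])"
definition hs :: "('e \<Rightarrow> 'e) \<Rightarrow> 'e list \<times> 'e \<Rightarrow> 'e list \<Rightarrow> bool" where
  "hs ebar e v = (if bwd ebar e then \<not> prefix (kw ebar e) v else prefix (kw ebar e) v)"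
definition rs :: "('e \<Rightarrow> 'e) \<Rightarrow> 'e list \<times> 'e \<Rightarrow> (nat \<Rightarrow> 'e) \<Rightarrow> bool" where
  "rs ebar e r = (if bwd ebar e then \<not> is_prefix (kw ebar e) r else is_prefix (kw ebar e) r)"

lemma X_t_alt: "X_t ebar e = (if bwd ebar e then butlast (fst e) else fst e @ [snd e])"
  by (cases e) (simp add: X_t_def bwd_def)

lemma is_prefix_snoc: "is_prefix (p @ [a]) r \<longleftrightarrow> is_prefix p r \<and> r (length p) = a"
  unfolding is_prefix_def by (auto simp: nth_append less_Suc_eq)

lemma is_prefix_Nil[simp]: "is_prefix [] r" and is_prefix_single[simp]: "is_prefix [a] r \<longleftrightarrow> r 0 = a"
  by (auto simp: is_prefix_def)

lemma Cyl_rs: "Cyl ebar R e = {r \<in> R. rs ebar e r}"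
  by (cases e) (auto simp: Cyl_def rs_def kw_def bwd_def is_prefix_snoc)

lemma is_prefix_prefix: "prefix x y \<Longrightarrow> is_prefix y r \<Longrightarrow> is_prefix x r"
  unfolding is_prefix_def prefix_def by (auto simp: nth_append)

lemma is_prefix_cmp: "is_prefix x r \<Longrightarrow> is_prefix y r \<Longrightarrow> length x \<le> length y \<Longrightarrow> prefix x y"
proof -
  assume a: "is_prefix x r" "is_prefix y r" "length x \<le> length y"
  have "take (length x) y = x"
    using a by (intro nth_equalityI) (auto simp: is_prefix_def)
  then show ?thesis by (metis prefix_def append_take_drop_id)
qed

lemma pure_side:
  assumes "(q, b) \<noteq> (w, c)" "(q, b) \<noteq> (w @ [c], ebar c)"
  shows "prefix (w @ [c]) q \<longleftrightarrow> prefix (w @ [c]) (X_t ebar (q, b))"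
proof (cases "q \<noteq> [] \<and> b = ebar (last q)")
  case True
  then obtain q' d where q: "q = q' @ [d]" by (metis append_butlast_last_id)
  with True have "b = ebar d" by simp
  with assms q True show ?thesis by (auto simp: X_t_def prefix_snoc)
next
  case False
  with assms show ?thesis by (auto simp: X_t_def prefix_snoc)
qed

lemma edge_unique: "X_o e = X_o f \<Longrightarrow> X_t ebar e = X_t ebar f \<Longrightarrow> e = f"
proof -
  assume a: "X_o e = X_o f" "X_t ebar e = X_t ebar f"
  obtain p x where e: "e = (p, x)" by fastforce
  obtain q y where f: "f = (q, y)" by fastforce
  have pq: "p = q" using a e f by (simp add: X_o_def)
  show ?thesis
  proof (cases "bwd ebar e")
    case True
    show ?thesis
    proof (cases "bwd ebar f")
      case True
      with \<open>bwd ebar e\<close> e f pq show ?thesis by (simp add: bwd_def)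
    next
      case False
      with \<open>bwd ebar e\<close> a e f pq have "butlast q = q @ [y]" by (simp add: X_t_alt)
      hence "length (butlast q) = length (q @ [y])" by simp
      thus ?thesis by simp
    qed
  next
    case False
    show ?thesis
    proof (cases "bwd ebar f")
      case True
      with \<open>\<not> bwd ebar e\<close> a e f pq have "butlast q = q @ [x]" by (simp add: X_t_alt)
      hence "length (butlast q) = length (q @ [x])" by simp
      thus ?thesis by simp
    next
      case False
      with \<open>\<not> bwd ebar e\<close> a e f pq show ?thesis by (simp add: X_t_alt)
    qed
  qed
qed

lemma hs_ends: "\<not> hs ebar e (X_o e)" "hs ebar e (X_t ebar e)"
proof -
  obtain p x where e: "e = (p, x)" by fastforce
  show "\<not> hs ebar e (X_o e)"
  proof (cases "bwd ebar e")
    case True thus ?thesis by (simp add: hs_def kw_def e X_o_def)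
  next
    case False
    have "\<not> prefix (p @ [x]) p" using prefix_length_le by fastforce
    thus ?thesis using False by (simp add: hs_def kw_def e X_o_def)
  qed
  show "hs ebar e (X_t ebar e)"
  proof (cases "bwd ebar e")
    case True
    hence "p \<noteq> []" by (simp add: bwd_def e)
    hence "\<not> prefix p (butlast p)" by (metis prefix_length_le length_butlast diff_less length_greater_0_conv zero_less_one not_le)
    thus ?thesis using True by (simp add: hs_def kw_def e X_t_alt)
  next
    case False thus ?thesis by (simp add: hs_def kw_def e X_t_alt)
  qed
qed

lemma red_path_snoc:
  assumes "red_path E org trm ebar v0 p" "a \<in> E" "org a = path_end trm v0 p"
    "p \<noteq> [] \<longrightarrow> a \<noteq> ebar (last p)"
  shows "red_path E org trm ebar v0 (p @ [a])"
  unfolding red_path_def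
proof (intro conjI allI impI)
  show "set (p @ [a]) \<subseteq> E" using assms(1,2) by (auto simp: red_path_def)
  show "org (hd (p @ [a])) = v0" if "p @ [a] \<noteq> []"
    using assms(1,3) by (cases p) (auto simp: red_path_def path_end_def)
  fix i assume i: "Suc i < length (p @ [a])"
  have "trm ((p @ [a]) ! i) = org ((p @ [a]) ! Suc i) \<and> (p @ [a]) ! Suc i \<noteq> ebar ((p @ [a]) ! i)"
  proof (cases "Suc i < length p")
    case True thus ?thesis using assms(1) by (simp add: red_path_def nth_append)
  next
    case False
    hence si: "Suc i = length p" using i by simp
    hence "p \<noteq> []" by auto
    have "i = length p - 1" using si by simp
    hence "p ! i = last p" using \<open>p \<noteq> []\<close> by (simp add: last_conv_nth)
    thus ?thesis using si assms(3,4) \<open>p \<noteq> []\<close> by (simp add: nth_append path_end_def)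
  qed
  thus "trm ((p @ [a]) ! i) = org ((p @ [a]) ! Suc i)" "(p @ [a]) ! Suc i \<noteq> ebar ((p @ [a]) ! i)" by auto
qed

lemma red_path_snocD:
  assumes "red_path E org trm ebar v0 (w @ [c])"
  shows "red_path E org trm ebar v0 w" "c \<in> E" "org c = path_end trm v0 w"
    "w \<noteq> [] \<Longrightarrow> c \<noteq> ebar (last w)"
proof -
  have R: "\<And>i. Suc i < length (w @ [c]) \<Longrightarrow> trm ((w@[c]) ! i) = org ((w@[c]) ! Suc i) \<and> (w@[c]) ! Suc i \<noteq> ebar ((w@[c]) ! i)"
    using assms by (simp add: red_path_def)
  show "red_path E org trm ebar v0 w" unfolding red_path_def
  proof (intro conjI allI impI)
    show "set w \<subseteq> E" using assms by (simp add: red_path_def)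
    show "org (hd w) = v0" if "w \<noteq> []" using assms that by (simp add: red_path_def)
    fix i assume "Suc i < length w"
    thus "trm (w ! i) = org (w ! Suc i)" "w ! Suc i \<noteq> ebar (w ! i)"
      using R[of i] by (simp_all add: nth_append)
  qed
  show "c \<in> E" using assms by (simp add: red_path_def)
  show "org c = path_end trm v0 w"
  proof (cases "w = []")
    case True thus ?thesis using assms by (simp add: red_path_def path_end_def)
  next
    case False
    then obtain i where si: "Suc i = length w" by (metis length_greater_0_conv Suc_pred)
    hence "w ! i = last w" by (metis False diff_Suc_1 last_conv_nth)
    thus ?thesis using R[of i] si False by (simp add: nth_append path_end_def)
  qed
  assume "w \<noteq> []"
  then obtain i where si: "Suc i = length w" by (metis length_greater_0_conv Suc_pred)
  hence "w ! i = last w" by (metis \<open>w \<noteq> []\<close> diff_Suc_1 last_conv_nth)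
  thus "c \<noteq> ebar (last w)" using R[of i] si by (simp add: nth_append)
qed

locale gr =
  fixes E :: "'e set" and org trm :: "'e \<Rightarrow> 'v" and ebar :: "'e \<Rightarrow> 'e" and v0 :: 'v
  assumes finE: "finite E" and eb_E: "\<And>a. a \<in> E \<Longrightarrow> ebar a \<in> E"
    and eb_inv: "\<And>a. a \<in> E \<Longrightarrow> ebar (ebar a) = a"
    and org_eb: "\<And>a. a \<in> E \<Longrightarrow> org (ebar a) = trm a"
begin

abbreviation "XE \<equiv> X_edge E org trm ebar v0"
abbreviation "RP \<equiv> red_path E org trm ebar v0"
abbreviation "RR \<equiv> rays E org trm ebar v0"

lemma XE_iff: "(p, a) \<in> XE \<longleftrightarrow> RP p \<and> a \<in> E \<and> org a = path_end trm v0 p"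
  by (simp add: X_edge_def)

lemma inv_props:
  assumes "e \<in> XE"
  shows "X_inv ebar e \<in> XE" "X_inv ebar (X_inv ebar e) = e" "bwd ebar (X_inv ebar e) = (\<not> bwd ebar e)"
    "kw ebar (X_inv ebar e) = kw ebar e"
proof -
  obtain p a where e: "e = (p, a)" by fastforce
  have rp: "RP p" and aE: "a \<in> E" and oa: "org a = path_end trm v0 p" using assms e by (auto simp: XE_iff)
  have "X_inv ebar e \<in> XE \<and> X_inv ebar (X_inv ebar e) = e \<and> bwd ebar (X_inv ebar e) = (\<not> bwd ebar e)
    \<and> kw ebar (X_inv ebar e) = kw ebar e"
  proof (cases "bwd ebar e")
    case False
    hence nb: "p \<noteq> [] \<longrightarrow> a \<noteq> ebar (last p)" by (auto simp: bwd_def e)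
    have inv: "X_inv ebar e = (p @ [a], ebar a)" using False by (simp add: X_inv_def X_t_alt e)
    have rp2: "RP (p @ [a])" by (rule red_path_snoc[OF rp aE oa nb])
    have "X_inv ebar e \<in> XE" using rp2 aE by (simp add: inv XE_iff eb_E org_eb path_end_def)
    moreover have "bwd ebar (X_inv ebar e)" by (simp add: inv bwd_def)
    moreover have "X_inv ebar (X_inv ebar e) = e"
      using \<open>bwd ebar (X_inv ebar e)\<close> unfolding inv by (simp add: X_inv_def X_t_alt eb_inv aE e)
    moreover have "kw ebar (X_inv ebar e) = kw ebar e"
      using \<open>bwd ebar (X_inv ebar e)\<close> False unfolding inv by (simp add: kw_def e)
    ultimately show ?thesis using False by simp
  next
    case True
    hence pne: "p \<noteq> []" and a: "a = ebar (last p)" by (auto simp: bwd_def e)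
    obtain w c where p: "p = w @ [c]" using pne by (metis append_butlast_last_id)
    have rw: "RP w" and cE: "c \<in> E" and oc: "org c = path_end trm v0 w" and nc: "w \<noteq> [] \<Longrightarrow> c \<noteq> ebar (last w)"
      using red_path_snocD[of E org trm ebar v0 w c] rp p by auto
    have inv: "X_inv ebar e = (w, c)" using True by (simp add: X_inv_def X_t_alt e p a eb_inv cE)
    have "X_inv ebar e \<in> XE" using rw cE oc by (simp add: inv XE_iff)
    moreover have nb: "\<not> bwd ebar (X_inv ebar e)" using nc by (auto simp: inv bwd_def)
    moreover have "X_inv ebar (X_inv ebar e) = e"
      using nb unfolding inv by (simp add: X_inv_def X_t_alt e p a)
    moreover have "kw ebar (X_inv ebar e) = kw ebar e"
      using nb True unfolding inv by (simp add: kw_def e p)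
    ultimately show ?thesis using True by simp
  qed
  thus "X_inv ebar e \<in> XE" "X_inv ebar (X_inv ebar e) = e" "bwd ebar (X_inv ebar e) = (\<not> bwd ebar e)"
    "kw ebar (X_inv ebar e) = kw ebar e" by auto
qed

lemma X_o_inv[simp]: "X_o (X_inv ebar e) = X_t ebar e"
  by (simp add: X_o_def X_inv_def)

lemma X_t_inv: "e \<in> XE \<Longrightarrow> X_t ebar (X_inv ebar e) = X_o e"
  by (metis X_o_inv inv_props(2))

lemma hs_inv: "e \<in> XE \<Longrightarrow> hs ebar (X_inv ebar e) v = (\<not> hs ebar e v)"
  using inv_props[of e] by (simp add: hs_def)

lemma rs_inv: "e \<in> XE \<Longrightarrow> rs ebar (X_inv ebar e) r = (\<not> rs ebar e r)"
  using inv_props[of e] by (simp add: rs_def)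

lemma side:
  assumes "e \<in> XE" "f \<noteq> e" "f \<noteq> X_inv ebar e"
  shows "hs ebar e (X_o f) = hs ebar e (X_t ebar f)"
proof -
  obtain p a where e: "e = (p, a)" by fastforce
  obtain q b where f: "f = (q, b)" by fastforce
  show ?thesis
  proof (cases "bwd ebar e")
    case False
    have inv: "X_inv ebar e = (p @ [a], ebar a)" using False by (simp add: X_inv_def X_t_alt e)
    have "prefix (p @ [a]) q \<longleftrightarrow> prefix (p @ [a]) (X_t ebar (q, b))"
      by (rule pure_side) (use assms e f inv in auto)
    thus ?thesis using False by (simp add: hs_def kw_def e f X_o_def)
  next
    case True
    hence pne: "p \<noteq> []" and a: "a = ebar (last p)" by (auto simp: bwd_def e)
    obtain w c where p: "p = w @ [c]" using pne by (metis append_butlast_last_id)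
    have cE: "c \<in> E" using assms(1) e p by (auto simp: XE_iff red_path_def)
    have inv: "X_inv ebar e = (w, c)" using True by (simp add: X_inv_def X_t_alt e p a eb_inv cE)
    have "prefix (w @ [c]) q \<longleftrightarrow> prefix (w @ [c]) (X_t ebar (q, b))"
      by (rule pure_side) (use assms e f inv p a in auto)
    thus ?thesis using True by (simp add: hs_def kw_def e f X_o_def p)
  qed
qed

end


lemma same_origin_disj:
  assumes "fst e1 = fst e2" "e1 \<noteq> e2" "rs ebar e1 r" "rs ebar e2 r"
  shows False
proof -
  obtain w b1 b2 where e1: "e1 = (w, b1)" and e2: "e2 = (w, b2)" using assms(1) by (metis prod.collapse)
  have b: "b1 \<noteq> b2" using assms(2) e1 e2 by simp
  show False
  proof (cases "bwd ebar e1")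
    case True
    show False
    proof (cases "bwd ebar e2")
      case True thus False using \<open>bwd ebar e1\<close> b e1 e2 by (simp add: bwd_def)
    next
      case False thus False using \<open>bwd ebar e1\<close> assms(3,4) e1 e2
        by (simp add: rs_def kw_def is_prefix_snoc)
    qed
  next
    case False
    show False
    proof (cases "bwd ebar e2")
      case True thus False using \<open>\<not> bwd ebar e1\<close> assms(3,4) e1 e2
        by (simp add: rs_def kw_def is_prefix_snoc)
    next
      case False thus False using \<open>\<not> bwd ebar e1\<close> assms(3,4) e1 e2 b
        by (simp add: rs_def kw_def is_prefix_snoc)
    qed
  qed
qed

context gr begin

abbreviation "qe e \<equiv> q_edges E org trm ebar v0 e"

lemma ray_XE:
  assumes "r \<in> RR" "is_prefix w r" "RP w"
  shows "(w, r (length w)) \<in> XE" "w \<noteq> [] \<Longrightarrow> r (length w) \<noteq> ebar (last w)"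
proof -
  have r: "\<And>i. r i \<in> E" "org (r 0) = v0" "\<And>i. trm (r i) = org (r (Suc i))" "\<And>i. r (Suc i) \<noteq> ebar (r i)"
    using assms(1) by (auto simp: rays_def)
  have "org (r (length w)) = path_end trm v0 w \<and> (w \<noteq> [] \<longrightarrow> r (length w) \<noteq> ebar (last w))"
  proof (cases "w = []")
    case True thus ?thesis using r by (simp add: path_end_def)
  next
    case False
    then obtain j where j: "length w = Suc j" by (metis length_greater_0_conv Suc_pred)
    have "last w = w ! j" using False j by (simp add: last_conv_nth)
    also have "\<dots> = r j" using assms(2) j by (simp add: is_prefix_def)
    finally show ?thesis using r(3,4)[of j] j False by (simp add: path_end_def)
  qed
  thus "(w, r (length w)) \<in> XE" "w \<noteq> [] \<Longrightarrow> r (length w) \<noteq> ebar (last w)"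
    using assms(3) r(1) by (auto simp: XE_iff)
qed

lemma decomp:
  assumes "e \<in> XE" "r \<in> RR"
  shows "rs ebar e r \<longleftrightarrow> (\<exists>e' \<in> qe e. rs ebar e' r)"
proof -
  obtain p a where e: "e = (p, a)" by fastforce
  show ?thesis
  proof (cases "bwd ebar e")
    case False
    define w where "w = p @ [a]"
    have inv: "X_inv ebar e = (w, ebar a)" using False by (simp add: X_inv_def X_t_alt e w_def)
    have tw: "X_t ebar e = w" using False by (simp add: X_t_alt e w_def)
    have rw: "RP w" using inv_props(1)[OF assms(1)] inv by (simp add: XE_iff)
    have rse: "rs ebar e r = is_prefix w r" using False by (simp add: rs_def kw_def e w_def)
    show ?thesis
    proof
      assume "rs ebar e r"
      hence pw: "is_prefix w r" using rse by simp
      define e' where "e' = (w, r (length w))"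
      have "r (length w) \<noteq> ebar (last w)" using ray_XE(2)[OF assms(2) pw rw] by (simp add: w_def)
      moreover have "last w = a" "w \<noteq> []" by (simp_all add: w_def)
      ultimately have "e' \<in> qe e" "rs ebar e' r"
        using ray_XE(1)[OF assms(2) pw rw] pw
        by (auto simp: q_edges_def e'_def tw inv X_o_def rs_def kw_def bwd_def is_prefix_snoc)
      thus "\<exists>e' \<in> qe e. rs ebar e' r" by blast
    next
      assume "\<exists>e' \<in> qe e. rs ebar e' r"
      then obtain e' where e'q: "e' \<in> qe e" and re': "rs ebar e' r" by blast
      obtain b where e': "e' = (w, b)" using e'q by (cases e') (auto simp: q_edges_def X_o_def tw)
      have "b \<noteq> ebar a" using e'q e' inv by (auto simp: q_edges_def)
      hence "\<not> bwd ebar e'" by (simp add: bwd_def e' w_def)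
      hence "is_prefix (w @ [b]) r" using re' by (simp add: rs_def kw_def e')
      thus "rs ebar e r" using rse by (simp add: is_prefix_snoc)
    qed
  next
    case True
    hence pne: "p \<noteq> []" and a: "a = ebar (last p)" by (auto simp: bwd_def e)
    obtain w c where p: "p = w @ [c]" using pne by (metis append_butlast_last_id)
    have rp: "RP p" using assms(1) e by (simp add: XE_iff)
    have rw: "RP w" and cE: "c \<in> E" and nc: "w \<noteq> [] \<Longrightarrow> c \<noteq> ebar (last w)"
      using red_path_snocD[of E org trm ebar v0 w c] rp p by auto
    have inv: "X_inv ebar e = (w, c)" using True by (simp add: X_inv_def X_t_alt e p a eb_inv cE)
    have tw: "X_t ebar e = w" using True by (simp add: X_t_alt e p)
    have rse: "rs ebar e r = (\<not> is_prefix (w @ [c]) r)" using True by (simp add: rs_def kw_def e p)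
    show ?thesis
    proof
      assume "rs ebar e r"
      hence np: "\<not> is_prefix (w @ [c]) r" using rse by simp
      show "\<exists>e' \<in> qe e. rs ebar e' r"
      proof (cases "is_prefix w r")
        case True
        define e' where "e' = (w, r (length w))"
        have "r (length w) \<noteq> c" using np True by (simp add: is_prefix_snoc)
        moreover have "w \<noteq> [] \<Longrightarrow> r (length w) \<noteq> ebar (last w)" using ray_XE(2)[OF assms(2) True rw] .
        ultimately have "e' \<in> qe e" "rs ebar e' r"
          using ray_XE(1)[OF assms(2) True rw] True
          by (auto simp: q_edges_def e'_def tw inv X_o_def rs_def kw_def bwd_def is_prefix_snoc)
        thus ?thesis by blast
      next
        case False
        hence wne: "w \<noteq> []" by auto
        have lE: "last w \<in> E" using rw wne by (auto simp: red_path_def)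
        define e' where "e' = (w, ebar (last w))"
        have "e' \<in> XE" using rw lE wne by (simp add: e'_def XE_iff eb_E org_eb path_end_def)
        moreover have "e' \<noteq> (w, c)" using nc wne by (auto simp: e'_def)
        moreover have "rs ebar e' r" using False wne by (simp add: rs_def kw_def bwd_def e'_def)
        ultimately show ?thesis by (auto simp: q_edges_def tw inv X_o_def e'_def)
      qed
    next
      assume "\<exists>e' \<in> qe e. rs ebar e' r"
      then obtain e' where e'q: "e' \<in> qe e" and re': "rs ebar e' r" by blast
      obtain b where e': "e' = (w, b)" using e'q by (cases e') (auto simp: q_edges_def X_o_def tw)
      have bc: "b \<noteq> c" using e'q e' inv by (auto simp: q_edges_def)
      show "rs ebar e r"
      proof (cases "bwd ebar e'")
        case True
        hence "\<not> is_prefix w r" using re' by (simp add: rs_def kw_def e')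
        thus ?thesis using rse by (auto simp: is_prefix_snoc)
      next
        case False
        hence "is_prefix (w @ [b]) r" using re' by (simp add: rs_def kw_def e')
        thus ?thesis using rse bc by (auto simp: is_prefix_snoc)
      qed
    qed
  qed
qed

end


lemma kw_alt: "kw ebar e = (if bwd ebar e then X_o e else X_t ebar e)"
  by (simp add: kw_def X_o_def X_t_alt)

lemma rays_disj:
  assumes "\<not> hs ebar e (X_o f)" "\<not> hs ebar e (X_t ebar f)" "\<not> hs ebar f (X_o e)" "\<not> hs ebar f (X_t ebar e)"
    "e \<noteq> f" "rs ebar e r" "rs ebar f r"
  shows False
proof (cases "bwd ebar e")
  case True
  show False
  proof (cases "bwd ebar f")
    case True
    have "prefix (kw ebar e) (kw ebar f)" "prefix (kw ebar f) (kw ebar e)"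
      using assms(1,3) True \<open>bwd ebar e\<close> by (simp_all add: hs_def kw_alt)
    hence "kw ebar e = kw ebar f" using prefix_order.antisym by blast
    hence "fst e = fst f" using True \<open>bwd ebar e\<close> by (simp add: kw_def)
    moreover hence "snd e = snd f" using True \<open>bwd ebar e\<close> by (simp add: bwd_def)
    ultimately show False using assms(5) by (simp add: prod_eq_iff)
  next
    case False
    have "prefix (kw ebar e) (kw ebar f)" using assms(2) False \<open>bwd ebar e\<close> by (simp add: hs_def kw_alt)
    moreover have "is_prefix (kw ebar f) r" using assms(7) False by (simp add: rs_def)
    ultimately show False using assms(6) \<open>bwd ebar e\<close> is_prefix_prefix by (simp add: rs_def) blast
  qed
next
  case False
  show False
  proof (cases "bwd ebar f")
    case True
    have "prefix (kw ebar f) (kw ebar e)" using assms(4) True \<open>\<not> bwd ebar e\<close> by (simp add: hs_def kw_alt)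
    moreover have "is_prefix (kw ebar e) r" using assms(6) False by (simp add: rs_def)
    ultimately show False using assms(7) True is_prefix_prefix by (simp add: rs_def) blast
  next
    case False
    have pe: "is_prefix (kw ebar e) r" "is_prefix (kw ebar f) r"
      using assms(6,7) False \<open>\<not> bwd ebar e\<close> by (simp_all add: rs_def)
    show False
    proof (cases "length (kw ebar e) \<le> length (kw ebar f)")
      case True
      hence "prefix (kw ebar e) (kw ebar f)" using is_prefix_cmp pe by blast
      thus False using assms(2) False \<open>\<not> bwd ebar e\<close> by (simp add: hs_def kw_alt)
    next
      case nle: False
      hence "length (kw ebar f) \<le> length (kw ebar e)" by simp
      hence "prefix (kw ebar f) (kw ebar e)" using is_prefix_cmp pe by blast
      thus False using assms(4) False \<open>\<not> bwd ebar e\<close> by (simp add: hs_def kw_alt)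
    qed
  qed
qed

locale gtree = gr E org trm ebar v0
  for E :: "'e set" and org trm :: "'e \<Rightarrow> 'v" and ebar :: "'e \<Rightarrow> 'e" and v0 :: 'v +
  fixes K :: "('e list \<times> 'e) set"
  assumes Kfin: "finite K" and Ksub: "K \<subseteq> XE" and Kinv: "\<And>e. e \<in> K \<Longrightarrow> X_inv ebar e \<in> K"
    and Kconn: "\<And>u v. u \<in> X_o ` K \<Longrightarrow> v \<in> X_o ` K \<Longrightarrow> (u, v) \<in> {(X_o e, X_t ebar e) | e. e \<in> K}\<^sup>*"
begin

abbreviation "TT \<equiv> terminal_edges ebar K"

lemma walk:
  assumes "(u, v) \<in> {(X_o e, X_t ebar e) | e. e \<in> K}\<^sup>*" "P u" "\<And>f. f \<in> K \<Longrightarrow> P (X_o f) \<Longrightarrow> P (X_t ebar f)"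
  shows "P v"
  using assms(1,2)
proof (induction rule: rtrancl_induct)
  case base thus ?case .
next
  case (step y z) thus ?case using assms(3) by blast
qed

lemma term_out:
  assumes "ei \<in> TT"
  shows "{g \<in> K. X_o g = X_t ebar ei} = {X_inv ebar ei}"
proof -
  have c: "card {g \<in> K. X_o g = X_t ebar ei} = 1" and eK: "ei \<in> K"
    using assms by (auto simp: terminal_edges_def sub_deg_def)
  have "X_inv ebar ei \<in> {g \<in> K. X_o g = X_t ebar ei}" using Kinv[OF eK] by simp
  thus ?thesis using c by (metis card_1_singletonE singletonD)
qed

lemma TT_K: "ei \<in> TT \<Longrightarrow> ei \<in> K" by (simp add: terminal_edges_def)

lemma inv_eq: "e \<in> XE \<Longrightarrow> f \<in> XE \<Longrightarrow> X_inv ebar e = X_inv ebar f \<Longrightarrow> e = f"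
  by (metis inv_props(2))

lemma leaf_side:
  assumes "ei \<in> TT" "w \<in> X_o ` K" "w \<noteq> X_t ebar ei"
  shows "\<not> hs ebar ei w"
proof -
  have eK: "ei \<in> K" using assms(1) by (rule TT_K)
  have eX: "ei \<in> XE" using eK Ksub by blast
  let ?P = "\<lambda>v. hs ebar ei v \<longrightarrow> v = X_t ebar ei"
  have "?P w"
  proof (rule walk[of "X_o ei" w])
    show "(X_o ei, w) \<in> {(X_o e, X_t ebar e) | e. e \<in> K}\<^sup>*" using Kconn eK assms(2) by blast
    show "?P (X_o ei)" using hs_ends(1) by blast
    fix f assume fK: "f \<in> K" and Pf: "?P (X_o f)"
    show "?P (X_t ebar f)"
    proof (cases "f = ei")
      case True thus ?thesis by simp
    next
      case False
      show ?thesis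
      proof (cases "f = X_inv ebar ei")
        case True thus ?thesis using X_t_inv[OF eX] hs_ends(1)[of ebar ei] by simp
      next
        case False
        have "hs ebar ei (X_o f) = hs ebar ei (X_t ebar f)" using side[OF eX \<open>f \<noteq> ei\<close> False] .
        moreover have "X_o f \<noteq> X_t ebar ei" using term_out[OF assms(1)] fK False by blast
        ultimately show ?thesis using Pf by blast
      qed
    qed
  qed
  thus ?thesis using assms(3) by blast
qed

lemma q_out:
  assumes "ei \<in> TT" "e' \<in> qe ei"
  shows "e' \<notin> K" "X_inv ebar e' \<notin> K" "X_t ebar e' \<notin> X_o ` K"
proof -
  have eK: "ei \<in> K" using assms(1) by (rule TT_K)
  have e'X: "e' \<in> XE" and oe': "X_o e' = X_t ebar ei" and ne': "e' \<noteq> X_inv ebar ei"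
    using assms(2) by (auto simp: q_edges_def)
  show nK: "e' \<notin> K" using term_out[OF assms(1)] oe' ne' by blast
  show niK: "X_inv ebar e' \<notin> K" using Kinv inv_props(2)[OF e'X] nK by metis
  have "\<not> hs ebar e' w" if "w \<in> X_o ` K" for w
  proof (rule walk[of "X_t ebar ei" w "\<lambda>v. \<not> hs ebar e' v"])
    have "X_t ebar ei \<in> X_o ` K" using Kinv[OF eK] by (metis X_o_inv image_eqI)
    thus "(X_t ebar ei, w) \<in> {(X_o e, X_t ebar e) | e. e \<in> K}\<^sup>*" using Kconn that by blast
    show "\<not> hs ebar e' (X_t ebar ei)" using hs_ends(1)[of ebar e'] oe' by simp
    fix f assume "f \<in> K" "\<not> hs ebar e' (X_o f)"
    moreover have "f \<noteq> e'" "f \<noteq> X_inv ebar e'" using \<open>f \<in> K\<close> nK niK by auto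
    ultimately show "\<not> hs ebar e' (X_t ebar f)" using side[OF e'X] by metis
  qed
  thus "X_t ebar e' \<notin> X_o ` K" using hs_ends(2)[of ebar e'] by blast
qed

lemma term_disj:
  assumes "ei \<in> TT" "ej \<in> TT" "ei \<noteq> ej" "rs ebar ei r" "rs ebar ej r"
  shows False
proof -
  have iK: "ei \<in> K" and jK: "ej \<in> K" using assms TT_K by auto
  have iX: "ei \<in> XE" and jX: "ej \<in> XE" using iK jK Ksub by auto
  show False
  proof (cases "ej = X_inv ebar ei")
    case True thus False using rs_inv[OF iX] assms(4,5) by simp
  next
    case False
    have a1: "X_t ebar ej \<noteq> X_t ebar ei"
    proof
      assume "X_t ebar ej = X_t ebar ei"
      hence "X_inv ebar ej \<in> {g \<in> K. X_o g = X_t ebar ei}" using Kinv[OF jK] by simp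
      hence "X_inv ebar ej = X_inv ebar ei" using term_out[OF assms(1)] by blast
      thus False using inv_eq[OF jX iX] assms(3) by simp
    qed
    have a2: "X_o ej \<noteq> X_t ebar ei" using term_out[OF assms(1)] jK False by blast
    have a3: "X_o ei \<noteq> X_t ebar ej"
    proof
      assume "X_o ei = X_t ebar ej"
      hence "ei = X_inv ebar ej" using term_out[OF assms(2)] iK by blast
      thus False using False inv_props(2)[OF jX] by simp
    qed
    have tj: "X_t ebar ej \<in> X_o ` K" using Kinv[OF jK] by (metis X_o_inv image_eqI)
    have ti: "X_t ebar ei \<in> X_o ` K" using Kinv[OF iK] by (metis X_o_inv image_eqI)
    show False
    proof (rule rays_disj[of ebar ei ej])
      show "\<not> hs ebar ei (X_o ej)" using leaf_side[OF assms(1) _ a2] jK by blast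
      show "\<not> hs ebar ei (X_t ebar ej)" using leaf_side[OF assms(1) tj a1] .
      show "\<not> hs ebar ej (X_o ei)" using leaf_side[OF assms(2) _ a3] iK by blast
      show "\<not> hs ebar ej (X_t ebar ei)" using leaf_side[OF assms(2) ti] a1 by metis
    qed (use assms in auto)
  qed
qed

end


context gtree begin

lemma qe_finite: "finite (qe e)"
proof -
  have "qe e \<subseteq> (\<lambda>b. (X_t ebar e, b)) ` E"
    by (auto simp: q_edges_def X_edge_def X_o_def)
  thus ?thesis using finE finite_subset by blast
qed

lemma term_add:
  assumes ei: "ei \<in> TT" and U: "U \<subseteq> qe ei" "U \<noteq> {}"
  shows "terminal_edges ebar (add_edges ebar K U) = (TT - {ei}) \<union> U"
proof -
  define K2 where "K2 = add_edges ebar K U"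
  have K2: "K2 = K \<union> U \<union> X_inv ebar ` U" by (simp add: K2_def add_edges_def)
  have eK: "ei \<in> K" using ei by (rule TT_K)
  have eX: "ei \<in> XE" using eK Ksub by blast
  have Ufin: "finite U" using U(1) qe_finite finite_subset by blast
  have K2fin: "finite K2" using K2 Kfin Ufin by simp
  have Uo: "\<And>e'. e' \<in> U \<Longrightarrow> X_o e' = X_t ebar ei" using U(1) by (auto simp: q_edges_def)
  have UX: "\<And>e'. e' \<in> U \<Longrightarrow> e' \<in> XE" using U(1) by (auto simp: q_edges_def)
  have Un: "\<And>e'. e' \<in> U \<Longrightarrow> e' \<noteq> X_inv ebar ei" using U(1) by (auto simp: q_edges_def)
  have Ut: "\<And>e'. e' \<in> U \<Longrightarrow> X_t ebar e' \<notin> X_o ` K" using q_out(3)[OF ei] U(1) by blast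
  have ti: "X_t ebar ei \<in> X_o ` K" using Kinv[OF eK] by (metis X_o_inv image_eqI)
  have tK: "\<And>f. f \<in> K \<Longrightarrow> X_t ebar f \<in> X_o ` K" using Kinv by (metis X_o_inv image_eqI)
  have dA: "sub_deg K2 v = sub_deg K v" if "v \<in> X_o ` K" "v \<noteq> X_t ebar ei" for v
  proof -
    have nv: "X_o g \<noteq> v" if g: "g \<in> U \<union> X_inv ebar ` U" for g
    proof (cases "g \<in> U")
      case True thus ?thesis using Uo \<open>v \<noteq> X_t ebar ei\<close> by metis
    next
      case False
      then obtain e'' where "e'' \<in> U" "g = X_inv ebar e''" using g by blast
      thus ?thesis using Ut \<open>v \<in> X_o ` K\<close> X_o_inv by metis
    qed
    have "{g \<in> K2. X_o g = v} = {g \<in> K. X_o g = v}"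
      using nv unfolding K2 by blast
    thus ?thesis by (simp add: sub_deg_def)
  qed
  have dB: "sub_deg K2 (X_t ebar ei) \<noteq> 1"
  proof -
    obtain e' where e': "e' \<in> U" using U(2) by blast
    have "{X_inv ebar ei, e'} \<subseteq> {g \<in> K2. X_o g = X_t ebar ei}"
      using Kinv[OF eK] e' Uo by (auto simp: K2)
    moreover have "card {X_inv ebar ei, e'} = 2" using Un[OF e'] by auto
    ultimately have "2 \<le> card {g \<in> K2. X_o g = X_t ebar ei}"
      using K2fin by (metis (no_types, lifting) card_mono finite_subset mem_Collect_eq subsetI)
    thus ?thesis by (simp add: sub_deg_def)
  qed
  have dC: "sub_deg K2 (X_t ebar e') = 1" if e': "e' \<in> U" for e'
  proof -
    have "{g \<in> K2. X_o g = X_t ebar e'} = {X_inv ebar e'}"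
    proof (intro equalityI subsetI)
      fix g assume g: "g \<in> {g \<in> K2. X_o g = X_t ebar e'}"
      hence gK2: "g \<in> K2" and og: "X_o g = X_t ebar e'" by auto
      have "g \<notin> K" using og Ut[OF e'] by force
      moreover have "g \<notin> U" using og Uo Ut[OF e'] ti by metis
      ultimately obtain e'' where e'': "e'' \<in> U" "g = X_inv ebar e''" using gK2 K2 by blast
      have "X_t ebar e'' = X_t ebar e'" using og e'' by simp
      moreover have "X_o e'' = X_o e'" using Uo e'' e' by simp
      ultimately have "e'' = e'" using edge_unique by metis
      thus "g \<in> {X_inv ebar e'}" using e'' by simp
    qed (use e' in \<open>auto simp: K2\<close>)
    thus ?thesis by (simp add: sub_deg_def)
  qed
  show ?thesis
  proof (intro equalityI subsetI)
    fix f assume "f \<in> terminal_edges ebar (add_edges ebar K U)"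
    hence fK2: "f \<in> K2" and df: "sub_deg K2 (X_t ebar f) = 1" by (auto simp: terminal_edges_def K2_def)
    consider "f \<in> K" | "f \<in> U" | e'' where "e'' \<in> U" "f = X_inv ebar e''" using fK2 K2 by blast
    thus "f \<in> (TT - {ei}) \<union> U"
    proof cases
      case 1
      show ?thesis
      proof (cases "X_t ebar f = X_t ebar ei")
        case True thus ?thesis using df dB by simp
      next
        case False
        hence "sub_deg K (X_t ebar f) = 1" using df dA tK[OF 1] by simp
        moreover have "f \<noteq> ei" using False by auto
        ultimately show ?thesis using 1 by (simp add: terminal_edges_def)
      qed
    next
      case 2 thus ?thesis by simp
    next
      case 3
      have "X_t ebar f = X_t ebar ei" using 3 X_t_inv UX Uo by simp
      thus ?thesis using df dB by simp
    qed
  next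
    fix f assume f: "f \<in> (TT - {ei}) \<union> U"
    show "f \<in> terminal_edges ebar (add_edges ebar K U)"
    proof (cases "f \<in> U")
      case True thus ?thesis using dC by (simp add: terminal_edges_def K2_def[symmetric] K2)
    next
      case False
      hence fT: "f \<in> TT" "f \<noteq> ei" using f by auto
      have fK: "f \<in> K" using fT TT_K by blast
      have fX: "f \<in> XE" using fK Ksub by blast
      have "X_t ebar f \<noteq> X_t ebar ei"
      proof
        assume "X_t ebar f = X_t ebar ei"
        hence "X_inv ebar f \<in> {g \<in> K. X_o g = X_t ebar ei}" using Kinv[OF fK] by simp
        hence "X_inv ebar f = X_inv ebar ei" using term_out[OF ei] by blast
        thus False using inv_eq[OF fX eX] fT by simp
      qed
      hence "sub_deg K2 (X_t ebar f) = 1" using dA tK[OF fK] fT by (simp add: terminal_edges_def)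
      thus ?thesis using fK by (simp add: terminal_edges_def K2_def[symmetric] K2)
    qed
  qed
qed

end


context gtree begin

abbreviation "Cy e \<equiv> Cyl ebar RR e"
abbreviation "SC L \<equiv> SCyl E org trm ebar v0 L"

lemma Cy_decomp: assumes "e \<in> XE" shows "Cy e = (\<Union>e' \<in> qe e. Cy e')"
  unfolding Cyl_rs using decomp[OF assms] by blast

lemma Cy_q_disj: "e' \<in> qe e \<Longrightarrow> e'' \<in> qe e \<Longrightarrow> e' \<noteq> e'' \<Longrightarrow> Cy e' \<inter> Cy e'' = {}"
  using same_origin_disj[of e' e'' ebar] by (auto simp: Cyl_rs q_edges_def X_o_def)

lemma Cy_T_disj: "ei \<in> TT \<Longrightarrow> ej \<in> TT \<Longrightarrow> ei \<noteq> ej \<Longrightarrow> Cy ei \<inter> Cy ej = {}"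
  unfolding Cyl_rs using term_disj[of ei ej] by blast

lemma SC_iff: "S \<in> SC L \<longleftrightarrow> S \<in> CN (bdry_top E org trm ebar v0) \<and>
   S \<subseteq> (\<Union>e \<in> terminal_edges ebar L. Cy e) \<and> (\<forall>e \<in> terminal_edges ebar L. S \<inter> Cy e \<noteq> {})"
  by (simp add: SCyl_def)

lemma SC_union:
  assumes ei: "ei \<in> TT"
  shows "SC K = (\<Union>U \<in> {U. U \<subseteq> qe ei \<and> U \<noteq> {}}. SC (add_edges ebar K U))"
proof -
  have eX: "ei \<in> XE" using TT_K[OF ei] Ksub by blast
  have dec: "Cy ei = (\<Union>e' \<in> qe ei. Cy e')" by (rule Cy_decomp[OF eX])
  show ?thesis
  proof (intro equalityI subsetI)
    fix S assume S: "S \<in> SC K"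
    hence C: "S \<in> CN (bdry_top E org trm ebar v0)" and sub: "S \<subseteq> (\<Union>e \<in> TT. Cy e)"
      and meet: "\<And>e. e \<in> TT \<Longrightarrow> S \<inter> Cy e \<noteq> {}" by (auto simp: SC_iff)
    define U where "U = {e' \<in> qe ei. S \<inter> Cy e' \<noteq> {}}"
    have Uq: "U \<subseteq> qe ei" by (auto simp: U_def)
    have Une: "U \<noteq> {}" using meet[OF ei] dec by (auto simp: U_def)
    have T2: "terminal_edges ebar (add_edges ebar K U) = (TT - {ei}) \<union> U" by (rule term_add[OF ei Uq Une])
    have "S \<in> SC (add_edges ebar K U)"
      unfolding SC_iff T2
    proof (intro conjI ballI subsetI)
      show "S \<in> CN (bdry_top E org trm ebar v0)" by (rule C)
      fix x assume x: "x \<in> S"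
      then obtain e where e: "e \<in> TT" "x \<in> Cy e" using sub by blast
      show "x \<in> (\<Union>e \<in> (TT - {ei}) \<union> U. Cy e)"
      proof (cases "e = ei")
        case False thus ?thesis using e by blast
      next
        case True
        then obtain e' where "e' \<in> qe ei" "x \<in> Cy e'" using e dec by blast
        hence "e' \<in> U" "x \<in> Cy e'" using x by (auto simp: U_def)
        thus ?thesis by blast
      qed
    next
      fix e assume "e \<in> (TT - {ei}) \<union> U"
      thus "S \<inter> Cy e \<noteq> {}" using meet unfolding U_def by blast
    qed
    thus "S \<in> (\<Union>U \<in> {U. U \<subseteq> qe ei \<and> U \<noteq> {}}. SC (add_edges ebar K U))" using Uq Une by blast
  next
    fix S assume "S \<in> (\<Union>U \<in> {U. U \<subseteq> qe ei \<and> U \<noteq> {}}. SC (add_edges ebar K U))"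
    then obtain U where Uq: "U \<subseteq> qe ei" and Une: "U \<noteq> {}" and S: "S \<in> SC (add_edges ebar K U)" by blast
    have T2: "terminal_edges ebar (add_edges ebar K U) = (TT - {ei}) \<union> U" by (rule term_add[OF ei Uq Une])
    have C: "S \<in> CN (bdry_top E org trm ebar v0)" and sub: "S \<subseteq> (\<Union>e \<in> (TT - {ei}) \<union> U. Cy e)"
      and meet: "\<And>e. e \<in> (TT - {ei}) \<union> U \<Longrightarrow> S \<inter> Cy e \<noteq> {}" using S by (auto simp: SC_iff T2)
    have Usub: "\<And>e'. e' \<in> U \<Longrightarrow> Cy e' \<subseteq> Cy ei" using dec Uq by blast
    show "S \<in> SC K" unfolding SC_iff
    proof (intro conjI ballI subsetI)
      show "S \<in> CN (bdry_top E org trm ebar v0)" by (rule C)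
      fix x assume "x \<in> S"
      then obtain e where e: "e \<in> (TT - {ei}) \<union> U" "x \<in> Cy e" using sub by blast
      thus "x \<in> (\<Union>e \<in> TT. Cy e)" using Usub ei by blast
    next
      fix e assume eT: "e \<in> TT"
      show "S \<inter> Cy e \<noteq> {}"
      proof (cases "e = ei")
        case False thus ?thesis using meet eT by blast
      next
        case True
        obtain e' where "e' \<in> U" using Une by blast
        thus ?thesis using meet[of e'] Usub True by blast
      qed
    qed
  qed
qed

lemma SC_disj:
  assumes ei: "ei \<in> TT"
  shows "disjoint_family_on (\<lambda>U. SC (add_edges ebar K U)) {U. U \<subseteq> qe ei \<and> U \<noteq> {}}"
  unfolding disjoint_family_on_def
proof (intro ballI impI)
  have eX: "ei \<in> XE" using TT_K[OF ei] Ksub by blast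
  have dec: "Cy ei = (\<Union>e' \<in> qe ei. Cy e')" by (rule Cy_decomp[OF eX])
  fix U U' assume U: "U \<in> {U. U \<subseteq> qe ei \<and> U \<noteq> {}}" and U': "U' \<in> {U. U \<subseteq> qe ei \<and> U \<noteq> {}}"
    and ne: "U \<noteq> U'"
  have key: False if A: "A \<in> {U. U \<subseteq> qe ei \<and> U \<noteq> {}}" and B: "B \<in> {U. U \<subseteq> qe ei \<and> U \<noteq> {}}"
    and e': "e' \<in> A" "e' \<notin> B" and SA: "S \<in> SC (add_edges ebar K A)" and SB: "S \<in> SC (add_edges ebar K B)"
    for A B e' S
  proof -
    have TA: "terminal_edges ebar (add_edges ebar K A) = (TT - {ei}) \<union> A" using term_add[OF ei] A by auto
    have TB: "terminal_edges ebar (add_edges ebar K B) = (TT - {ei}) \<union> B" using term_add[OF ei] B by auto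
    have "\<forall>e \<in> (TT - {ei}) \<union> A. S \<inter> Cy e \<noteq> {}" using SA by (simp add: SC_iff TA)
    then obtain x where x: "x \<in> S" "x \<in> Cy e'" using e'(1) by blast
    have e'q: "e' \<in> qe ei" using A e'(1) by blast
    have xi: "x \<in> Cy ei" using dec e'q x(2) by blast
    have "S \<subseteq> (\<Union>e \<in> (TT - {ei}) \<union> B. Cy e)" using SB by (simp add: SC_iff TB)
    then obtain f where f: "f \<in> (TT - {ei}) \<union> B" "x \<in> Cy f" using x(1) by blast
    show False
    proof (cases "f \<in> B")
      case True
      hence "f \<in> qe ei" "f \<noteq> e'" using B e'(2) by auto
      thus False using Cy_q_disj[OF e'q] x(2) f(2) by blast
    next
      case False
      hence "f \<in> TT" "f \<noteq> ei" using f(1) by auto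
      thus False using Cy_T_disj[OF ei] xi f(2) by blast
    qed
  qed
  show "SC (add_edges ebar K U) \<inter> SC (add_edges ebar K U') = {}"
  proof (rule ccontr)
    assume "SC (add_edges ebar K U) \<inter> SC (add_edges ebar K U') \<noteq> {}"
    then obtain S where S: "S \<in> SC (add_edges ebar K U)" "S \<in> SC (add_edges ebar K U')" by blast
    from ne obtain e' where "(e' \<in> U \<and> e' \<notin> U') \<or> (e' \<in> U' \<and> e' \<notin> U)" by blast
    thus False using key[OF U U' _ _ S] key[OF U' U _ _ S(2) S(1)] by blast
  qed
qed

end


context gr begin

abbreviation "PT \<equiv> product_topology (\<lambda>_. discrete_topology E) (UNIV :: nat set)"
abbreviation "BT \<equiv> bdry_top E org trm ebar v0"

lemma RR_top: "RR \<subseteq> topspace PT"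
  by (auto simp: rays_def PiE_def extensional_def)

lemma coord_open: "A \<subseteq> E \<Longrightarrow> openin PT {r \<in> topspace PT. r i \<in> A}"
  by (rule openin_continuous_map_preimage[OF continuous_map_product_projection]) auto

lemma Cyl_open: "openin BT (Cyl ebar RR e)"
proof (cases "bwd ebar e")
  case False
  define w where "w = kw ebar e"
  define Q where "Q = \<Inter> (insert (topspace PT) ((\<lambda>i. {r \<in> topspace PT. r i \<in> E \<inter> {w ! i}}) ` {..<length w}))"
  have c: "\<And>i. openin PT {r \<in> topspace PT. r i \<in> E \<inter> {w ! i}}" by (rule coord_open) blast
  have oO: "openin PT Q" unfolding Q_def
    apply (rule openin_Inter)
      apply (simp only: finite_insert finite_imageI finite_lessThan)
     apply (simp only: insert_not_empty not_False_eq_True)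
    apply (erule insertE)
     apply (simp only: openin_topspace)
    using c by blast
  have "Cyl ebar RR e = RR \<inter> Q"
    using False RR_top by (auto simp: Cyl_rs rs_def w_def[symmetric] Q_def is_prefix_def rays_def)
  thus ?thesis using oO by (simp add: bdry_top_def openin_subtopology_Int2)
next
  case True
  define w where "w = kw ebar e"
  define Q where "Q = \<Union> ((\<lambda>i. {r \<in> topspace PT. r i \<in> E - {w ! i}}) ` {..<length w})"
  have c: "\<And>i. openin PT {r \<in> topspace PT. r i \<in> E - {w ! i}}" by (rule coord_open) blast
  have oO: "openin PT Q" unfolding Q_def
    by (rule openin_Union) (use c in blast)
  have "Cyl ebar RR e = RR \<inter> Q"
    using True RR_top by (auto simp: Cyl_rs rs_def w_def[symmetric] Q_def is_prefix_def rays_def)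
  thus ?thesis using oO by (simp add: bdry_top_def openin_subtopology_Int2)
qed

lemma SCyl_open:
  assumes "finite (terminal_edges ebar L)" "terminal_edges ebar L \<noteq> {}"
  shows "openin (vietoris BT (CN BT)) (SCyl E org trm ebar v0 L)"
proof -
  let ?T = "terminal_edges ebar L"
  let ?C = "CN BT"
  define W where "W = (\<Union>e \<in> ?T. Cyl ebar RR e)"
  have oW: "openin BT W" unfolding W_def using Cyl_open by blast
  have eq: "SCyl E org trm ebar v0 L = \<Inter> (insert {S \<in> ?C. S \<subseteq> W} ((\<lambda>e. {S \<in> ?C. S \<inter> Cyl ebar RR e \<noteq> {}}) ` ?T))"
    using assms(2) by (auto simp: SCyl_def W_def)
  show ?thesis unfolding eq vietoris_def
  proof (rule openin_Inter)
    show "finite (insert {S \<in> ?C. S \<subseteq> W} ((\<lambda>e. {S \<in> ?C. S \<inter> Cyl ebar RR e \<noteq> {}}) ` ?T))"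
      using assms(1) by simp
  next
    fix X assume "X \<in> insert {S \<in> ?C. S \<subseteq> W} ((\<lambda>e. {S \<in> ?C. S \<inter> Cyl ebar RR e \<noteq> {}}) ` ?T)"
    thus "openin (topology_generated_by ({{S \<in> ?C. S \<subseteq> U} | U. openin BT U} \<union> {{S \<in> ?C. S \<inter> U \<noteq> {}} | U. openin BT U})) X"
      using oW Cyl_open by (auto intro!: topology_generated_by_Basis)
  qed simp
qed

end


theorem proposition3p11:
  fixes V :: "'v set" and E :: "'e set" and org trm :: "'e \<Rightarrow> 'v" and ebar :: "'e \<Rightarrow> 'e"
    and v0 :: 'v and K :: "('e list \<times> 'e) set" and M :: "(nat \<Rightarrow> 'e) set measure"
    and ei :: "'e list \<times> 'e"
  assumes "fin_graph V E org trm ebar" and "graph_connected V E org trm" and "no_degree_one V E org"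
    and "v0 \<in> V"
    and "finite_subtree E org trm ebar v0 K" and "non_degenerate ebar K"
    and "subset_current E org trm ebar v0 M"
    and "ei \<in> terminal_edges ebar K"
  shows "emeasure M (SCyl E org trm ebar v0 K) =
    (\<Sum>U \<in> {U. U \<subseteq> q_edges E org trm ebar v0 ei \<and> U \<noteq> {}}.
        emeasure M (SCyl E org trm ebar v0 (add_edges ebar K U)))"
proof -
  interpret gr E org trm ebar v0
    using assms(1) by unfold_locales (auto simp: fin_graph_def)
  interpret gtree E org trm ebar v0 K
    using assms(5) by unfold_locales (auto simp: finite_subtree_def sub_verts_def)
  let ?P = "{U. U \<subseteq> qe ei \<and> U \<noteq> {}}"
  let ?VT = "vietoris BT (CN BT)"
  have setsM: "sets M = sets (borel_of ?VT)" using assms(7) by (simp add: subset_current_def Let_def)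
  have Pfin: "finite ?P" using qe_finite by (simp add: finite_subset[of _ "Pow (qe ei)"] subset_iff)
  have meas: "SC (add_edges ebar K U) \<in> sets M" if U: "U \<in> ?P" for U
  proof -
    have T2: "terminal_edges ebar (add_edges ebar K U) = (TT - {ei}) \<union> U"
      using term_add[OF assms(8)] U by auto
    have "finite U" using qe_finite[of ei] U finite_subset by blast
    moreover have "finite TT" using Kfin finite_subset[of TT K] by (auto simp: terminal_edges_def)
    ultimately have "finite (terminal_edges ebar (add_edges ebar K U))"
      unfolding T2 by simp
    moreover have "terminal_edges ebar (add_edges ebar K U) \<noteq> {}" unfolding T2 using U by auto
    ultimately have op: "openin ?VT (SC (add_edges ebar K U))" by (rule SCyl_open)
    have "{A. openin ?VT A} \<subseteq> Pow (topspace ?VT)" using openin_subset by blast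
    hence "sets (borel_of ?VT) = sigma_sets (topspace ?VT) {A. openin ?VT A}"
      by (simp add: borel_of_def sets_measure_of)
    thus ?thesis using op setsM by auto
  qed
  have "emeasure M (SC K) = emeasure M (\<Union>U \<in> ?P. SC (add_edges ebar K U))"
    using SC_union[OF assms(8)] by simp
  also have "\<dots> = (\<Sum>U \<in> ?P. emeasure M (SC (add_edges ebar K U)))"
    by (rule sum_emeasure[symmetric]) (use meas SC_disj[OF assms(8)] Pfin in auto)
  finally show ?thesis .
qed

end
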